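(* Let $\mathbb{X}$ be a reflexive Banach space and $\mathbb{Y}$ any Banach space. Let $T\in\mathbb{L}(\mathbb{X},\mathbb{Y})$ with $\|T\|=1$, suppose $\mathbb{K}(\mathbb{X},\mathbb{Y})$ is an $M$-ideal of $\mathbb{L}(\mathbb{X},\mathbb{Y})$ and $\operatorname{dist}(T,\mathbb{K}(\mathbb{X},\mathbb{Y}))<1$. Suppose $\{x_1,\dots,x_r\}$ is a maximal linearly independent subset of $M_T\cap\operatorname{Ext}(B_{\mathbb{X}})$ and that $Tx_i$ is $m_i$-smooth for $1\le i\le r$. Then $\dim\operatorname{span}J(T)\ge\sum_{i=1}^r m_i$.
   Context: $\mathbb{L}(\mathbb{X},\mathbb{Y})$ (resp. $\mathbb{K}(\mathbb{X},\mathbb{Y})$): bounded (resp. compact) linear operators with operator norm. $M$-ideal: a closed subspace $\mathbb{V}$ of $\mathbb{Z}$ with $\mathbb{Z}^*=\mathbb{V}^*\oplus_1\mathbb{V}^\perp$ (unique decomposition $z^*=z_1^*+z_2^*$, $z_2^*\in\mathbb{V}^\perp$, $\|z^*\|=\|z_1^*\|+\|z_2^*\|$). $B_{\mathbb{X}}$ is the closed unit ball, $\operatorname{Ext}(C)$ the extreme points of a convex set $C$, $M_T=\{x:\|x\|=1,\|Tx\|=\|T\|\}$. For a unit vector $z$ of a Banach space $\mathbb{Z}$, $J(z)=\{f\in\mathbb{Z}^*:\|f\|=1,f(z)=1\}$, and $z$ is $k$-smooth if $\dim\operatorname{span}J(z)=k$ (this applies also to $T$ as a unit vector of $\mathbb{L}(\mathbb{X},\mathbb{Y})$).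 *)

theory Defs
  imports "HOL-Analysis.Analysis"
begin

definition reflexive_space :: "'a::real_normed_vector itself \<Rightarrow> bool" where
  "reflexive_space _ \<longleftrightarrow>
     (\<forall>\<phi> :: ('a \<Rightarrow>\<^sub>L real) \<Rightarrow>\<^sub>L real. \<exists>x::'a. \<forall>f. blinfun_apply \<phi> f = blinfun_apply f x)"

definition compact_ops :: "('a::real_normed_vector \<Rightarrow>\<^sub>L 'b::real_normed_vector) set" where
  "compact_ops = {T. compact (closure (blinfun_apply T ` cball 0 1))}"

definition annihilator :: "'z::real_normed_vector set \<Rightarrow> ('z \<Rightarrow>\<^sub>L real) set" where
  "annihilator V = {f. \<forall>v\<in>V. blinfun_apply f v = 0}"

text \<open>M-ideal: Z* = W (+)_1 V-perp, unique decomposition, with W a subspace (identified with V*).\<close>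
definition M_ideal :: "'z::real_normed_vector set \<Rightarrow> bool" where
  "M_ideal V \<longleftrightarrow> subspace V \<and> closed V \<and>
     (\<exists>W :: ('z \<Rightarrow>\<^sub>L real) set. subspace W \<and>
        (\<forall>f. \<exists>!p. fst p \<in> W \<and> snd p \<in> annihilator V \<and> f = fst p + snd p) \<and>
        (\<forall>w\<in>W. \<forall>g\<in>annihilator V. norm (w + g) = norm w + norm g))"

definition M_set :: "('a::real_normed_vector \<Rightarrow>\<^sub>L 'b::real_normed_vector) \<Rightarrow> 'a set" where
  "M_set T = {x. norm x = 1 \<and> norm (blinfun_apply T x) = norm T}"

definition J_set :: "'z::real_normed_vector \<Rightarrow> ('z \<Rightarrow>\<^sub>L real) set" where
  "J_set z = {f. norm f = 1 \<and> blinfun_apply f z = 1}"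

definition finite_dim_set :: "'a::real_vector set \<Rightarrow> bool" where
  "finite_dim_set S \<longleftrightarrow> (\<exists>B. finite B \<and> span B = span S)"

definition k_smooth :: "'z::real_normed_vector \<Rightarrow> nat \<Rightarrow> bool" where
  "k_smooth z k \<longleftrightarrow> norm z = 1 \<and> finite_dim_set (J_set z) \<and> dim (span (J_set z)) = k"

end

theory Submission
  imports Defs
begin


definition goodG :: "('a::real_normed_vector \<times> real) set \<Rightarrow> bool" where
 "goodG G \<longleftrightarrow> (0,0) \<in> G \<and> (\<forall>x a b. (x,a)\<in>G \<longrightarrow> (x,b)\<in>G \<longrightarrow> a=b)
   \<and> (\<forall>x a y b. (x,a)\<in>G \<longrightarrow> (y,b)\<in>G \<longrightarrow> (x+y,a+b)\<in>G)
   \<and> (\<forall>x a c. (x,a)\<in>G \<longrightarrow> (c *\<^sub>R x, c*a)\<in>G)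
   \<and> (\<forall>x a. (x,a)\<in>G \<longrightarrow> a \<le> norm x)"

lemma goodG_D:
  assumes "goodG G"
  shows "(0,0) \<in> G" "\<And>x a b. (x,a)\<in>G \<Longrightarrow> (x,b)\<in>G \<Longrightarrow> a=b"
    "\<And>x a y b. (x,a)\<in>G \<Longrightarrow> (y,b)\<in>G \<Longrightarrow> (x+y,a+b)\<in>G"
    "\<And>x a c. (x,a)\<in>G \<Longrightarrow> (c *\<^sub>R x, c*a)\<in>G"
    "\<And>x a. (x,a)\<in>G \<Longrightarrow> a \<le> norm x"
  using assms unfolding goodG_def by blast+

lemma goodG_I:
  assumes "(0,0) \<in> G" "\<And>x a b. (x,a)\<in>G \<Longrightarrow> (x,b)\<in>G \<Longrightarrow> a=b"
    "\<And>x a y b. (x,a)\<in>G \<Longrightarrow> (y,b)\<in>G \<Longrightarrow> (x+y,a+b)\<in>G"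
    "\<And>x a c. (x,a)\<in>G \<Longrightarrow> (c *\<^sub>R x, c*a)\<in>G"
    "\<And>x a. (x,a)\<in>G \<Longrightarrow> a \<le> norm x"
  shows "goodG G"
  using assms unfolding goodG_def by blast

lemma goodG_chain:
  assumes C: "C \<noteq> {}" "\<forall>G\<in>C. goodG G" "chain\<^sub>\<subseteq> C"
  shows "goodG (\<Union>C)"
proof -
  have two: "\<exists>G\<in>C. p \<in> G \<and> q \<in> G" if h: "p \<in> \<Union>C" "q \<in> \<Union>C" for p q
  proof -
    obtain G1 G2 where "G1 \<in> C" "G2 \<in> C" "p \<in> G1" "q \<in> G2" using h by blast
    moreover have "G1 \<subseteq> G2 \<or> G2 \<subseteq> G1" using C(3) calculation unfolding chain_subset_def by blast
    ultimately show ?thesis by blast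
  qed
  have gd: "goodG G" if "G \<in> C" for G using C(2) that by blast
  show ?thesis
  proof (rule goodG_I)
    obtain G where "G \<in> C" using C(1) by blast
    then show "(0,0) \<in> \<Union>C" using goodG_D(1)[OF gd] by blast
  next
    fix x a b assume "(x,a)\<in>\<Union>C" "(x,b)\<in>\<Union>C"
    then obtain G where "G\<in>C" "(x,a)\<in>G" "(x,b)\<in>G" using two by blast
    then show "a = b" using goodG_D(2)[OF gd] by blast
  next
    fix x a y b assume "(x,a)\<in>\<Union>C" "(y,b)\<in>\<Union>C"
    then obtain G where "G\<in>C" "(x,a)\<in>G" "(y,b)\<in>G" using two by blast
    then show "(x+y,a+b) \<in> \<Union>C" using goodG_D(3)[OF gd] by blast
  next
    fix x a c assume "(x,a)\<in>\<Union>C"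
    then obtain G where "G\<in>C" "(x,a)\<in>G" by blast
    then show "(c *\<^sub>R x, c*a) \<in> \<Union>C" using goodG_D(4)[OF gd] by blast
  next
    fix x a assume "(x,a)\<in>\<Union>C"
    then obtain G where "G\<in>C" "(x,a)\<in>G" by blast
    then show "a \<le> norm x" using goodG_D(5)[OF gd] by blast
  qed
qed

lemma goodG_extend:
  fixes M :: "('a::real_normed_vector \<times> real) set"
  assumes g: "goodG M" and z: "\<forall>a. (z,a) \<notin> M"
  shows "\<exists>M'. goodG M' \<and> M \<subseteq> M' \<and> M' \<noteq> M"
proof -
  have M0: "(0,0)\<in>M" and Mf: "\<And>x a b. (x,a)\<in>M \<Longrightarrow> (x,b)\<in>M \<Longrightarrow> a=b"
    and Ma: "\<And>x a y b. (x,a)\<in>M \<Longrightarrow> (y,b)\<in>M \<Longrightarrow> (x+y,a+b)\<in>M"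
    and Ms: "\<And>x a c. (x,a)\<in>M \<Longrightarrow> (c *\<^sub>R x, c*a)\<in>M"
    and Mb: "\<And>x a. (x,a)\<in>M \<Longrightarrow> a \<le> norm x"
    using goodG_D[OF g] by blast+
  define L where "L = {b - norm (v - z) | v b. (v,b) \<in> M}"
  define c where "c = Sup L"
  have key: "b - norm (v - z) \<le> norm (u + z) - a" if "(u,a)\<in>M" "(v,b)\<in>M" for u a v b
  proof -
    have "a + b \<le> norm (u + v)" using Mb[OF Ma[OF that]] .
    also have "\<dots> \<le> norm (u + z) + norm (v - z)"
      using norm_triangle_ineq[of "u+z" "v-z"] by simp
    finally show ?thesis by simp
  qed
  have Lne: "L \<noteq> {}" using M0 unfolding L_def by blast
  have Lbdd: "bdd_above L" unfolding L_def bdd_above_def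
    using key[OF M0] by (intro exI[of _ "norm (0 + z) - 0"]) auto
  have cup: "b - norm (v - z) \<le> c" if "(v,b)\<in>M" for v b
    unfolding c_def by (rule cSup_upper[OF _ Lbdd]) (use that L_def in blast)
  have clow: "c \<le> norm (u + z) - a" if "(u,a)\<in>M" for u a
    unfolding c_def by (rule cSup_least[OF Lne]) (use key[OF that] L_def in blast)
  define M' where "M' = {(x + t *\<^sub>R z, a + t*c) | x a t. (x,a)\<in>M}"
  have inD: False if "(x,a)\<in>M" "(x',a')\<in>M" "x + t *\<^sub>R z = x' + t' *\<^sub>R z" "t \<noteq> t'" for x a x' a' t t'
  proof -
    have "(x + (-1) *\<^sub>R x', a + (-1)*a') \<in> M" using Ma[OF that(1) Ms[OF that(2)]] .
    from Ms[OF this, of "1/(t'-t)"]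
    have "((1/(t'-t)) *\<^sub>R (x - x'), (1/(t'-t)) * (a - a')) \<in> M" by simp
    moreover have "(1/(t'-t)) *\<^sub>R (x - x') = z"
    proof -
      have "x - x' = (t' - t) *\<^sub>R z" using that(3) by (simp add: algebra_simps)
      then show ?thesis using that(4) by simp
    qed
    ultimately show False using z by auto
  qed
  have "goodG M'"
  proof (rule goodG_I)
    have "(0::'a,0::real) = (0 + 0 *\<^sub>R z, 0 + 0*c)" by simp
    then show "(0,0)\<in>M'" unfolding M'_def using M0 by blast
  next
    fix w p q assume "(w,p)\<in>M'" "(w,q)\<in>M'"
    then obtain x a t x' a' t' where h: "(x,a)\<in>M" "(x',a')\<in>M" "w = x + t *\<^sub>R z" "p = a + t*c"
      "w = x' + t' *\<^sub>R z" "q = a' + t'*c" unfolding M'_def by blast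
    have "t = t'" using inD[OF h(1,2)] h by metis
    then have "x = x'" using h by simp
    then have "a = a'" using Mf h by blast
    then show "p = q" using h \<open>t=t'\<close> by simp
  next
    fix w p w' q assume "(w,p)\<in>M'" "(w',q)\<in>M'"
    then obtain x a t x' a' t' where h: "(x,a)\<in>M" "(x',a')\<in>M" "w = x + t *\<^sub>R z" "p = a + t*c"
      "w' = x' + t' *\<^sub>R z" "q = a' + t'*c" unfolding M'_def by blast
    have "w + w' = (x + x') + (t + t') *\<^sub>R z" "p + q = (a + a') + (t+t')*c"
      using h by (auto simp: algebra_simps)
    then show "(w+w',p+q) \<in> M'" unfolding M'_def using Ma[OF h(1,2)] by blast
  next
    fix w p r assume "(w,p)\<in>M'"
    then obtain x a t where h: "(x,a)\<in>M" "w = x + t *\<^sub>R z" "p = a + t*c" unfolding M'_def by blast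
    have "r *\<^sub>R w = r *\<^sub>R x + (r*t) *\<^sub>R z" "r * p = r*a + (r*t)*c"
      using h by (auto simp: algebra_simps)
    then show "(r *\<^sub>R w, r*p) \<in> M'" unfolding M'_def using Ms[OF h(1)] by blast
  next
    fix w p assume "(w,p)\<in>M'"
    then obtain x a t where h: "(x,a)\<in>M" "w = x + t *\<^sub>R z" "p = a + t*c" unfolding M'_def by blast
    show "p \<le> norm w"
    proof (cases t "0::real" rule: linorder_cases)
      case equal then show ?thesis using h Mb by simp
    next
      case greater
      have "c \<le> norm ((1/t) *\<^sub>R x + z) - (1/t)*a" using clow[OF Ms[OF h(1)]] .
      also have "(1/t) *\<^sub>R x + z = (1/t) *\<^sub>R w" using h greater by (simp add: algebra_simps)
      finally have "c \<le> (1/t) * norm w - (1/t)*a" using greater by simp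
      then have "t*c \<le> t*((1/t) * norm w - (1/t)*a)" using greater by (simp add: mult_left_mono)
      then show ?thesis using h greater by (simp add: algebra_simps)
    next
      case less
      define s where "s = -t"
      have s: "s > 0" using less s_def by simp
      have "(1/s)*a - norm ((1/s) *\<^sub>R x - z) \<le> c" using cup[OF Ms[OF h(1)]] .
      also have "(1/s) *\<^sub>R x - z = (1/s) *\<^sub>R w" using h s s_def by (simp add: algebra_simps)
      finally have "(1/s)*a - (1/s) * norm w \<le> c" using s by simp
      then have "s*((1/s)*a - (1/s) * norm w) \<le> s*c" using s by (simp add: mult_left_mono)
      then show ?thesis using h s s_def by (simp add: algebra_simps)
    qed
  qed
  moreover have "M \<subseteq> M'"
  proof safe
    fix x a assume h: "(x,a)\<in>M"
    have "(x,a) = (x + 0 *\<^sub>R z, a + 0*c)" by simp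
    then show "(x,a)\<in>M'" unfolding M'_def using h by blast
  qed
  moreover have "(z, c) \<in> M'"
  proof -
    have "(z,c) = (0 + 1 *\<^sub>R z, 0 + 1*c)" by simp
    then show ?thesis unfolding M'_def using M0 by blast
  qed
  moreover have "M' \<noteq> M" using \<open>(z, c) \<in> M'\<close> z by blast
  ultimately show ?thesis by blast
qed

lemma hahn_banach_norming:
  fixes y :: "'a::real_normed_vector"
  assumes "y \<noteq> 0"
  shows "\<exists>f::'a \<Rightarrow>\<^sub>L real. blinfun_apply f y = norm y"
proof -
  define G0 where "G0 = {(t *\<^sub>R y, t * norm y) | t. True}"
  have g0: "goodG G0" unfolding G0_def
  proof (rule goodG_I)
    show "(0::'a, 0::real) \<in> {(t *\<^sub>R y, t * norm y) |t. True}" by (auto intro!: exI[of _ 0])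
  next
    fix x :: 'a and a b :: real assume "(x, a) \<in> {(t *\<^sub>R y, t * norm y) |t. True}" "(x, b) \<in> {(t *\<^sub>R y, t * norm y) |t. True}"
    then obtain t s where "x = t *\<^sub>R y" "a = t * norm y" "x = s *\<^sub>R y" "b = s * norm y" by blast
    then show "a = b" using assms by (metis scaleR_cancel_right)
  next
    fix x w :: 'a and a b :: real assume "(x, a) \<in> {(t *\<^sub>R y, t * norm y) |t. True}" "(w, b) \<in> {(t *\<^sub>R y, t * norm y) |t. True}"
    then obtain t s where "x = t *\<^sub>R y" "a = t * norm y" "w = s *\<^sub>R y" "b = s * norm y" by blast
    then show "(x + w, a + b) \<in> {(t *\<^sub>R y, t * norm y) |t. True}"
      by (auto intro!: exI[of _ "t+s"] simp: algebra_simps)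
  next
    fix x :: 'a and a c :: real assume "(x, a) \<in> {(t *\<^sub>R y, t * norm y) |t. True}"
    then obtain t where "x = t *\<^sub>R y" "a = t * norm y" by blast
    then show "(c *\<^sub>R x, c * a) \<in> {(t *\<^sub>R y, t * norm y) |t. True}"
      by (auto intro!: exI[of _ "c*t"])
  next
    fix x :: 'a and a :: real assume "(x, a) \<in> {(t *\<^sub>R y, t * norm y) |t. True}"
    then obtain t where "x = t *\<^sub>R y" "a = t * norm y" by blast
    then show "a \<le> norm x" by (simp add: mult_right_mono)
  qed
  define A where "A = {G. goodG G \<and> G0 \<subseteq> G}"
  have "\<exists>M\<in>A. \<forall>X\<in>A. M \<subseteq> X \<longrightarrow> X = M"
  proof (rule Zorn_Lemma2, intro ballI)
    fix C assume C: "C \<in> chains A"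
    show "\<exists>U\<in>A. \<forall>X\<in>C. X \<subseteq> U"
    proof (cases "C = {}")
      case True then show ?thesis using g0 A_def by auto
    next
      case False
      have "goodG (\<Union>C)" using goodG_chain[OF False] C unfolding chains_def A_def by auto
      moreover have "G0 \<subseteq> \<Union>C" using False C unfolding chains_def A_def by auto
      ultimately show ?thesis unfolding A_def by blast
    qed
  qed
  then obtain M where MA: "M \<in> A" and Mmax: "\<And>X. X \<in> A \<Longrightarrow> M \<subseteq> X \<Longrightarrow> X = M" by blast
  have g: "goodG M" and G0M: "G0 \<subseteq> M" using MA A_def by auto
  have tot: "\<exists>a. (x,a)\<in>M" for x
  proof (rule ccontr)
    assume "\<not> ?thesis"
    then obtain M' where "goodG M'" "M \<subseteq> M'" "M' \<noteq> M" using goodG_extend[OF g] by blast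
    then show False using Mmax[of M'] G0M A_def by auto
  qed
  have Mf: "\<And>x a b. (x,a)\<in>M \<Longrightarrow> (x,b)\<in>M \<Longrightarrow> a=b"
    and Ma: "\<And>x a y b. (x,a)\<in>M \<Longrightarrow> (y,b)\<in>M \<Longrightarrow> (x+y,a+b)\<in>M"
    and Ms: "\<And>x a c. (x,a)\<in>M \<Longrightarrow> (c *\<^sub>R x, c*a)\<in>M"
    and Mb: "\<And>x a. (x,a)\<in>M \<Longrightarrow> a \<le> norm x"
    using goodG_D[OF g] by blast+
  define f where "f x = (THE a. (x,a)\<in>M)" for x
  have fM: "(x, f x) \<in> M" for x
    unfolding f_def using tot[of x] Mf by (metis theI)
  have fu: "f x = a" if "(x,a)\<in>M" for x a using Mf[OF that fM] by simp
  have bl: "bounded_linear f"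
  proof (rule bounded_linear_intro[where K=1])
    show "f (x + w) = f x + f w" for x w by (rule fu[OF Ma[OF fM fM]])
    show "f (r *\<^sub>R x) = r *\<^sub>R f x" for r x using fu[OF Ms[OF fM[of x], of r]] by simp
    show "norm (f x) \<le> norm x * 1" for x
    proof -
      have "f x \<le> norm x" using Mb[OF fM] .
      moreover have "- f x \<le> norm x" using Mb[OF Ms[OF fM[of x], of "-1"]] by simp
      ultimately show ?thesis by simp
    qed
  qed
  have "f y = norm y" using fu G0M unfolding G0_def by (metis (mono_tags, lifting) CollectI mult_1 scaleR_one subsetD)
  then show ?thesis using bounded_linear_Blinfun_apply[OF bl] by metis
qed



lemma biorth:
  fixes S :: "'a::real_normed_vector set"
  assumes "finite S" "independent S"
  shows "\<exists>\<phi>::'a \<Rightarrow> ('a \<Rightarrow>\<^sub>L real). \<forall>x\<in>S. \<forall>x'\<in>S. blinfun_apply (\<phi> x) x' = (if x = x' then 1 else 0)"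
  using assms
proof (induction S rule: finite_induct)
  case empty show ?case by simp
next
  case (insert x F)
  have indF: "independent F" using insert.prems by (meson independent_mono subset_insertI)
  have xnot: "x \<notin> span F" using insert.prems insert.hyps(2) by (simp add: independent_insert)
  obtain \<phi> :: "'a \<Rightarrow> ('a \<Rightarrow>\<^sub>L real)" where \<phi>0: "\<forall>i\<in>F. \<forall>j\<in>F. blinfun_apply (\<phi> i) j = (if i = j then 1 else 0)"
    using insert.IH[OF indF] by blast
  have \<phi>: "\<And>i j. i\<in>F \<Longrightarrow> j\<in>F \<Longrightarrow> blinfun_apply (\<phi> i) j = (if i = j then 1 else 0)"
    using \<phi>0 by blast
  define y where "y = x - (\<Sum>i\<in>F. blinfun_apply (\<phi> i) x *\<^sub>R i)"
  have y0: "y \<noteq> 0"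
  proof
    assume "y = 0"
    then have "x = (\<Sum>i\<in>F. blinfun_apply (\<phi> i) x *\<^sub>R i)" unfolding y_def by simp
    also have "\<dots> \<in> span F" by (intro span_sum span_scale span_base)
    finally show False using xnot by simp
  qed
  obtain \<psi> :: "'a \<Rightarrow>\<^sub>L real" where \<psi>: "blinfun_apply \<psi> y = norm y"
    using hahn_banach_norming[OF y0] by blast
  define \<psi>' where "\<psi>' = \<psi> - (\<Sum>i\<in>F. blinfun_apply \<psi> i *\<^sub>R \<phi> i)"
  have \<psi>'app: "blinfun_apply \<psi>' v = blinfun_apply \<psi> v - (\<Sum>i\<in>F. blinfun_apply \<psi> i * blinfun_apply (\<phi> i) v)" for v
    unfolding \<psi>'_def by (simp add: blinfun.diff_left blinfun.sum_left blinfun.scaleR_left)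
  have \<psi>'F: "blinfun_apply \<psi>' j = 0" if "j \<in> F" for j
  proof -
    have "(\<Sum>i\<in>F. blinfun_apply \<psi> i * blinfun_apply (\<phi> i) j) = (\<Sum>i\<in>F. if i = j then blinfun_apply \<psi> i else 0)"
      by (rule sum.cong) (use \<phi> that in auto)
    also have "\<dots> = blinfun_apply \<psi> j" using that insert.hyps(1) by simp
    finally show ?thesis using \<psi>'app by simp
  qed
  have \<psi>'x: "blinfun_apply \<psi>' x = norm y"
  proof -
    have "blinfun_apply \<psi> y = blinfun_apply \<psi> x - (\<Sum>i\<in>F. blinfun_apply (\<phi> i) x * blinfun_apply \<psi> i)"
      unfolding y_def by (simp add: blinfun.diff_right blinfun.sum_right blinfun.scaleR_right)
    then show ?thesis using \<psi> \<psi>'app by (simp add: mult.commute)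
  qed
  define ch where "ch = (1 / norm y) *\<^sub>R \<psi>'"
  have chx: "blinfun_apply ch x = 1" using \<psi>'x y0 unfolding ch_def by (simp add: blinfun.scaleR_left)
  have chF: "blinfun_apply ch j = 0" if "j\<in>F" for j using \<psi>'F[OF that] unfolding ch_def by (simp add: blinfun.scaleR_left)
  define \<phi>' where "\<phi>' j = (if j = x then ch else \<phi> j - blinfun_apply (\<phi> j) x *\<^sub>R ch)" for j
  have "\<forall>a\<in>insert x F. \<forall>b\<in>insert x F. blinfun_apply (\<phi>' a) b = (if a = b then 1 else 0)"
    using insert.hyps(2) chx chF \<phi> unfolding \<phi>'_def by (auto simp: blinfun.diff_left blinfun.scaleR_left)
  then show ?case by blast
qed



definition evf :: "'a::real_normed_vector \<Rightarrow> ('b::real_normed_vector \<Rightarrow>\<^sub>L real) \<Rightarrow> (('a \<Rightarrow>\<^sub>L 'b) \<Rightarrow>\<^sub>L real)" where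
  "evf x g = Blinfun (\<lambda>A. blinfun_apply g (blinfun_apply A x))"

definition r1 :: "('a::real_normed_vector \<Rightarrow>\<^sub>L real) \<Rightarrow> 'b::real_normed_vector \<Rightarrow> ('a \<Rightarrow>\<^sub>L 'b)" where
  "r1 f y = Blinfun (\<lambda>v. blinfun_apply f v *\<^sub>R y)"

lemma evf_apply[simp]: "blinfun_apply (evf x g) A = blinfun_apply g (blinfun_apply A x)"
proof -
  have "bounded_linear (\<lambda>A::'a \<Rightarrow>\<^sub>L 'b. blinfun_apply g (blinfun_apply A x))"
    by (rule bounded_linear_compose[OF blinfun.bounded_linear_right blinfun.bounded_linear_left])
  then show ?thesis unfolding evf_def by (simp add: bounded_linear_Blinfun_apply)
qed

lemma r1_apply[simp]: "blinfun_apply (r1 f y) v = blinfun_apply f v *\<^sub>R y"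
proof -
  have "bounded_linear (\<lambda>v. blinfun_apply f v *\<^sub>R y)"
    by (rule bounded_linear_compose[OF bounded_linear_scaleR_left blinfun.bounded_linear_right])
  then show ?thesis unfolding r1_def by (simp add: bounded_linear_Blinfun_apply)
qed

lemma evf_J:
  fixes T :: "'a::real_normed_vector \<Rightarrow>\<^sub>L 'b::real_normed_vector"
  assumes "norm T = 1" "norm x = 1" "g \<in> J_set (blinfun_apply T x)"
  shows "evf x g \<in> J_set T"
proof -
  have g: "norm g = 1" "blinfun_apply g (blinfun_apply T x) = 1" using assms(3) J_set_def by auto
  have le: "norm (evf x g) \<le> 1"
  proof (rule norm_blinfun_bound)
    fix A :: "'a \<Rightarrow>\<^sub>L 'b"
    have "norm (blinfun_apply (evf x g) A) \<le> norm g * norm (blinfun_apply A x)"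
      using norm_blinfun[of g "blinfun_apply A x"] by simp
    also have "\<dots> \<le> norm g * (norm A * norm x)" using g by (simp add: norm_blinfun)
    finally show "norm (blinfun_apply (evf x g) A) \<le> 1 * norm A" using g assms(2) by simp
  qed simp
  have "1 \<le> norm (evf x g)"
  proof -
    have "norm (blinfun_apply (evf x g) T) \<le> norm (evf x g) * norm T" by (rule norm_blinfun)
    then show ?thesis using g assms(1) by simp
  qed
  with le g show ?thesis unfolding J_set_def by simp
qed



theorem mainTheorem3:
  fixes T :: "'a::banach \<Rightarrow>\<^sub>L 'b::banach"
    and S :: "'a set" and m :: "'a \<Rightarrow> nat"
  assumes "reflexive_space TYPE('a)"
    and "norm T = 1"
    and "M_ideal (compact_ops :: ('a \<Rightarrow>\<^sub>L 'b) set)"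
    and "infdist T compact_ops < 1"
    and "finite S"
    and "S \<subseteq> M_set T \<inter> {x. x extreme_point_of cball 0 1}"
    and "independent S"
    and "\<And>S'. S \<subseteq> S' \<Longrightarrow> S' \<subseteq> M_set T \<inter> {x. x extreme_point_of cball 0 1}
               \<Longrightarrow> independent S' \<Longrightarrow> S' = S"
    and "\<And>x. x \<in> S \<Longrightarrow> k_smooth (blinfun_apply T x) (m x)"
  shows "\<not> finite_dim_set (J_set T) \<or> (\<Sum>x\<in>S. m x) \<le> dim (span (J_set T))"
proof (cases "finite_dim_set (J_set T)")
  case False then show ?thesis by simp
next
  case True
  note finS = assms(5)
  have nx: "norm x = 1" if "x \<in> S" for x using assms(6) that M_set_def by auto
  obtain \<phi> :: "'a \<Rightarrow> ('a \<Rightarrow>\<^sub>L real)" where \<phi>0: "\<forall>x\<in>S. \<forall>x'\<in>S. blinfun_apply (\<phi> x) x' = (if x = x' then 1 else 0)"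
    using biorth[OF assms(5,7)] by blast
  have \<phi>: "\<And>i j. i\<in>S \<Longrightarrow> j\<in>S \<Longrightarrow> blinfun_apply (\<phi> i) j = (if i = j then 1 else 0)" using \<phi>0 by blast
  have "\<forall>x\<in>S. \<exists>B. B \<subseteq> J_set (blinfun_apply T x) \<and> independent B \<and> finite B \<and> card B = m x"
  proof
    fix x assume x: "x \<in> S"
    have ks: "finite_dim_set (J_set (blinfun_apply T x))" "dim (span (J_set (blinfun_apply T x))) = m x"
      using assms(9)[OF x] k_smooth_def by auto
    obtain B0 where B0: "finite B0" "span B0 = span (J_set (blinfun_apply T x))"
      using ks(1) finite_dim_set_def by blast
    obtain B where B: "B \<subseteq> J_set (blinfun_apply T x)" "independent B" "J_set (blinfun_apply T x) \<subseteq> span B"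
      by (rule maximal_independent_subset)
    have "B \<subseteq> span B0" using B(1) B0(2) span_superset[of "J_set (blinfun_apply T x)"] by blast
    then have "finite B" using independent_span_bound[OF B0(1) B(2)] by simp
    moreover have "card B = m x" using basis_card_eq_dim[OF B(1,3,2)] ks(2) by simp
    ultimately show "\<exists>B. B \<subseteq> J_set (blinfun_apply T x) \<and> independent B \<and> finite B \<and> card B = m x"
      using B(1,2) by (intro exI[of _ B]) simp
  qed
  from bchoice[OF this] obtain B where Bc: "\<forall>x\<in>S. B x \<subseteq> J_set (blinfun_apply T x) \<and> independent (B x) \<and> finite (B x) \<and> card (B x) = m x"
    by blast
  have B: "\<And>x. x\<in>S \<Longrightarrow> B x \<subseteq> J_set (blinfun_apply T x)" "\<And>x. x\<in>S \<Longrightarrow> independent (B x)"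
    "\<And>x. x\<in>S \<Longrightarrow> finite (B x)" "\<And>x. x\<in>S \<Longrightarrow> card (B x) = m x" using Bc by auto
  have Bn: "norm g = 1" if "x\<in>S" "g \<in> B x" for x g using B(1)[OF that(1)] that(2) J_set_def by auto
  have test: "blinfun_apply (evf x g) (r1 (\<phi> x0) y) = (if x0 = x then blinfun_apply g y else 0)"
    if "x\<in>S" "x0\<in>S" for x x0 g y using \<phi>[OF that(2,1)] by (simp add: blinfun.zero_right)
  have inj: "inj_on (evf x) (B x)" if x: "x\<in>S" for x
  proof (rule inj_onI)
    fix g g' assume "g \<in> B x" "g' \<in> B x" "evf x g = evf x g'"
    then have "blinfun_apply (evf x g) (r1 (\<phi> x) y) = blinfun_apply (evf x g') (r1 (\<phi> x) y)" for y by simp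
    then show "g = g'" using \<phi>[OF x x] by (intro blinfun_eqI) simp
  qed
  have disj: "evf x ` B x \<inter> evf x' ` B x' = {}" if "x\<in>S" "x'\<in>S" "x \<noteq> x'" for x x'
  proof (rule ccontr)
    assume "\<not> ?thesis"
    then obtain g g' where gg: "g \<in> B x" "g' \<in> B x'" "evf x g = evf x' g'" by blast
    have "blinfun_apply g y = 0" for y
      using arg_cong[OF gg(3), of "\<lambda>E. blinfun_apply E (r1 (\<phi> x) y)"] \<phi>[OF that(1,1)] \<phi>[OF that(1,2)] that(3)
      by (simp add: blinfun.zero_right)
    then have "g = 0" by (intro blinfun_eqI) simp
    then show False using Bn[OF that(1) gg(1)] by simp
  qed
  define U where "U = (\<Union>x\<in>S. evf x ` B x)"
  have finU: "finite U" unfolding U_def by (intro finite_UN_I finite_imageI) (simp_all add: finS B(3))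
  have cardU: "card U = (\<Sum>x\<in>S. m x)"
  proof -
    have "card U = (\<Sum>x\<in>S. card (evf x ` B x))" unfolding U_def
      using finS B(3) disj by (intro card_UN_disjoint) auto
    also have "\<dots> = (\<Sum>x\<in>S. m x)"
      by (rule sum.cong) (simp_all add: card_image[OF inj] B(4))
    finally show ?thesis .
  qed
  have UJ: "U \<subseteq> J_set T" unfolding U_def
  proof safe
    fix x g assume "x \<in> S" "g \<in> B x"
    then show "evf x g \<in> J_set T" using evf_J[OF assms(2) nx] B(1) by blast
  qed
  have indU: "independent U"
  proof
    assume "dependent U"
    then obtain u where u: "\<exists>v\<in>U. u v \<noteq> 0" "(\<Sum>v\<in>U. u v *\<^sub>R v) = 0"
      using dependent_finite[OF finU] by blast
    then obtain x0 g0 where x0: "x0 \<in> S" "g0 \<in> B x0" "u (evf x0 g0) \<noteq> 0" unfolding U_def by blast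
    have "blinfun_apply (\<Sum>g\<in>B x0. u (evf x0 g) *\<^sub>R g) y = 0" for y
    proof -
      have "0 = blinfun_apply (\<Sum>v\<in>U. u v *\<^sub>R v) (r1 (\<phi> x0) y)" using u(2) by simp
      also have "\<dots> = (\<Sum>v\<in>U. u v * blinfun_apply v (r1 (\<phi> x0) y))" by (simp add: blinfun.sum_left blinfun.scaleR_left)
      also have "\<dots> = (\<Sum>v\<in>evf x0 ` B x0. u v * blinfun_apply v (r1 (\<phi> x0) y))"
      proof (rule sum.mono_neutral_right[OF finU])
        show "evf x0 ` B x0 \<subseteq> U" unfolding U_def using x0 by blast
        show "\<forall>v\<in>U - evf x0 ` B x0. u v * blinfun_apply v (r1 (\<phi> x0) y) = 0"
        proof
          fix v assume "v \<in> U - evf x0 ` B x0"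
          then obtain x g where "x \<in> S" "g \<in> B x" "v = evf x g" "x \<noteq> x0" unfolding U_def by blast
          then show "u v * blinfun_apply v (r1 (\<phi> x0) y) = 0" using test[of x x0 g y] x0 by simp
        qed
      qed
      also have "\<dots> = (\<Sum>g\<in>B x0. u (evf x0 g) * blinfun_apply (evf x0 g) (r1 (\<phi> x0) y))"
        by (rule sum.reindex[OF inj[OF x0(1)], unfolded comp_def])
      also have "\<dots> = (\<Sum>g\<in>B x0. u (evf x0 g) * blinfun_apply g y)"
        using \<phi>[OF x0(1) x0(1)] by simp
      also have "\<dots> = blinfun_apply (\<Sum>g\<in>B x0. u (evf x0 g) *\<^sub>R g) y" by (simp add: blinfun.sum_left blinfun.scaleR_left)
      finally show ?thesis by simp
    qed
    then have "(\<Sum>g\<in>B x0. u (evf x0 g) *\<^sub>R g) = 0" by (intro blinfun_eqI) simp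
    then have "dependent (B x0)" unfolding dependent_finite[OF B(3)[OF x0(1)]]
      by (intro exI[of _ "\<lambda>g. u (evf x0 g)"]) (use x0 in auto)
    then show False using B(2)[OF x0(1)] by simp
  qed
  obtain B0 where B0: "finite B0" "span B0 = span (J_set T)" using True finite_dim_set_def by blast
  have UJ': "U \<subseteq> span (J_set T)" using UJ span_superset[of "J_set T"] by blast
  obtain BB where BB: "U \<subseteq> BB" "BB \<subseteq> span (J_set T)" "independent BB" "span (J_set T) \<subseteq> span BB"
    by (rule maximal_independent_subset_extend[OF UJ' indU])
  have finBB: "finite BB" using independent_span_bound[OF B0(1) BB(3)] BB(2) B0(2) by simp
  have "card BB = dim (span (J_set T))" by (rule basis_card_eq_dim[OF BB(2,4,3)])
  moreover have "card U \<le> card BB" by (rule card_mono[OF finBB BB(1)])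
  ultimately show ?thesis using cardU by simp
qed


end
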